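(* In the scalar case $n=1$, with $A<0$ and $B\neq 0$ real numbers, for every $D>0$, $$\mathcal{I}^c(D)=(\log_2 e)\,\max\Big\{0,\;A+\frac{B^2}{2D}\Big\}.$$
   Context: Standing assumptions: $n\ge 1$. The matrix $A\in\mathbb{R}^{n\times n}$ is Hurwitz, i.e. all its eigenvalues have strictly negative real part. The matrix $B\in\mathbb{R}^{n\times n}$ satisfies $BB^\top\succ 0$. The matrix $\Sigma_0\in\mathbb{R}^{n\times n}$ satisfies $\Sigma_0\succ 0$. Definition of $\mathcal{F}$: $\mathcal{F}$ is the set of measurable functions $C:[0,\infty)\to\mathbb{R}^{n\times n}$, $t\mapsto C_t$, for which there exists an absolutely continuous $X:[0,\infty)\to\mathbb{R}^{n\times n}$ with $X_0=\Sigma_0$, $\|X_t\|_2<\infty$ and $X_t\succ 0$ for all $t\ge 0$, satisfying the Riccati equation $$\dot X_t=AX_t+X_tA^\top-X_tC_t^\top C_tX_t+BB^\top$$ for almost every $t$. Definition of the CT information-distortion function: for $D>0$, $$\mathcal{I}^c(D)=\inf_{C\in\mathcal{F}}\ \limsup_{T\to\infty}\frac1T\cdot\frac{1}{2\ln 2}\int_0^T\mathrm{Tr}(C_tX_tC_t^\top)\,dt$$ subject to $$\limsup_{T\to\infty}\frac1T\int_0^T\mathrm{Tr}(X_t)\,dt\le D,$$ where $X_t$ is the Riccati solution associated with $C_t$. The infimum of an empty set is $+\infty$. *)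

theory Defs
  imports "HOL-Analysis.Analysis"
begin

definition abs_continuous_on_interval :: "real \<Rightarrow> real \<Rightarrow> (real \<Rightarrow> real) \<Rightarrow> bool" where
  "abs_continuous_on_interval a b f \<longleftrightarrow>
     (\<forall>\<epsilon>>0. \<exists>\<delta>>0. \<forall>(n::nat) (I::nat \<Rightarrow> real \<times> real).
        (\<forall>k<n. a \<le> fst (I k) \<and> fst (I k) \<le> snd (I k) \<and> snd (I k) \<le> b) \<and>
        (\<forall>j<n. \<forall>k<n. j \<noteq> k \<longrightarrow> {fst (I j)<..<snd (I j)} \<inter> {fst (I k)<..<snd (I k)} = {}) \<and>
        (\<Sum>k<n. snd (I k) - fst (I k)) < \<delta>
        \<longrightarrow> (\<Sum>k<n. \<bar>f (snd (I k)) - f (fst (I k))\<bar>) < \<epsilon>)"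

definition abs_continuous_on_halfline :: "(real \<Rightarrow> real) \<Rightarrow> bool" where
  "abs_continuous_on_halfline f \<longleftrightarrow> (\<forall>b\<ge>0. abs_continuous_on_interval 0 b f)"

text \<open>Scalar case n = 1: the pair (C, X) is admissible, i.e. C is measurable on [0,\<infinity>) and
  X is an absolutely continuous, positive solution of the scalar Riccati equation
  dX/dt = 2 A X - C^2 X^2 + B^2 (a.e.) with X 0 = Sigma0.  (Finiteness of the norm is automatic.)\<close>
definition riccati_solution_scalar ::
  "real \<Rightarrow> real \<Rightarrow> real \<Rightarrow> (real \<Rightarrow> real) \<Rightarrow> (real \<Rightarrow> real) \<Rightarrow> bool" where
  "riccati_solution_scalar A B \<Sigma>0 C X \<longleftrightarrow>
     set_borel_measurable lborel {0..} C \<and>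
     abs_continuous_on_halfline X \<and> X 0 = \<Sigma>0 \<and> (\<forall>t\<ge>0. X t > 0) \<and>
     (AE t in lborel. t \<ge> 0 \<longrightarrow>
        (X has_real_derivative (A * X t + X t * A - X t * C t * C t * X t + B * B)) (at t))"

definition rate_scalar :: "(real \<Rightarrow> real) \<Rightarrow> (real \<Rightarrow> real) \<Rightarrow> ennreal" where
  "rate_scalar C X = Limsup at_top (\<lambda>T::real.
      ennreal (1 / T) * ennreal (1 / (2 * ln 2)) *
      (\<integral>\<^sup>+ t \<in> {0..T}. ennreal (C t * X t * C t) \<partial>lborel))"

definition distortion_scalar :: "(real \<Rightarrow> real) \<Rightarrow> ennreal" where
  "distortion_scalar X = Limsup at_top (\<lambda>T::real.
      ennreal (1 / T) * (\<integral>\<^sup>+ t \<in> {0..T}. ennreal (X t) \<partial>lborel))"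

text \<open>The CT information-distortion function (scalar case); Inf of the empty set is \<infinity> (= top).\<close>
definition info_distortion_scalar :: "real \<Rightarrow> real \<Rightarrow> real \<Rightarrow> real \<Rightarrow> ennreal" where
  "info_distortion_scalar A B \<Sigma>0 D =
     Inf {rate_scalar C X | C X. riccati_solution_scalar A B \<Sigma>0 C X \<and> distortion_scalar X \<le> ennreal D}"

end

theory Submission
  imports Defs
begin


definition ivs :: "real \<Rightarrow> real \<Rightarrow> nat \<Rightarrow> (nat \<Rightarrow> real \<times> real) \<Rightarrow> bool" where
  "ivs a b n I \<longleftrightarrow> (\<forall>k<n. a \<le> fst (I k) \<and> fst (I k) \<le> snd (I k) \<and> snd (I k) \<le> b) \<and>
        (\<forall>j<n. \<forall>k<n. j \<noteq> k \<longrightarrow> {fst (I j)<..<snd (I j)} \<inter> {fst (I k)<..<snd (I k)} = {})"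

lemma ac_iff: "abs_continuous_on_interval a b f \<longleftrightarrow>
  (\<forall>e>0. \<exists>d>0. \<forall>n I. ivs a b n I \<and> (\<Sum>k<n. snd (I k) - fst (I k)) < d \<longrightarrow>
      (\<Sum>k<n. \<bar>f (snd (I k)) - f (fst (I k))\<bar>) < e)"
  unfolding abs_continuous_on_interval_def ivs_def by (simp add: conj_assoc)

lemma acE:
  assumes "abs_continuous_on_interval a b f" "e > 0"
  obtains d where "d > 0" "\<And>n I. ivs a b n I \<Longrightarrow> (\<Sum>k<n. snd (I k) - fst (I k)) < d \<Longrightarrow>
      (\<Sum>k<n. \<bar>f (snd (I k)) - f (fst (I k))\<bar>) < e"
proof -
  from assms(1)[unfolded ac_iff, rule_format, OF assms(2)] obtain d where d: "d>0"
    "\<forall>n I. ivs a b n I \<and> (\<Sum>k<n. snd (I k) - fst (I k)) < d \<longrightarrow>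
      (\<Sum>k<n. \<bar>f (snd (I k)) - f (fst (I k))\<bar>) < e" by blast
  show ?thesis by (rule that[OF d(1)]) (use d(2) in blast)
qed

lemma ac_continuous:
  assumes "abs_continuous_on_interval a b f"
  shows "continuous_on {a..b} f"
  unfolding continuous_on_iff
proof (intro ballI allI impI)
  fix x e :: real assume x: "x \<in> {a..b}" and e: "0 < e"
  obtain d where d: "d > 0" and H: "\<And>n I. ivs a b n I \<Longrightarrow> (\<Sum>k<n. snd (I k) - fst (I k)) < d \<Longrightarrow>
      (\<Sum>k<n. \<bar>f (snd (I k)) - f (fst (I k))\<bar>) < e"
    by (rule acE[OF assms e], blast)
  show "\<exists>d>0. \<forall>x'\<in>{a..b}. dist x' x < d \<longrightarrow> dist (f x') (f x) < e"
  proof (intro exI[of _ d] conjI ballI impI)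
    fix y assume y: "y \<in> {a..b}" "dist y x < d"
    have "\<bar>f (max x y) - f (min x y)\<bar> < e"
      using H[of 1 "\<lambda>_. (min x y, max x y)"] x y by (auto simp: dist_real_def ivs_def)
    then show "dist (f y) (f x) < e"
      by (cases "x \<le> y") (auto simp: dist_real_def min_def max_def abs_minus_commute)
  qed (use d in auto)
qed

lemma ac_lipschitz_rel:
  assumes h: "abs_continuous_on_interval a b h" and L: "L \<ge> 0"
    and bd: "\<And>c d. a \<le> c \<Longrightarrow> c \<le> d \<Longrightarrow> d \<le> b \<Longrightarrow> \<bar>f d - f c\<bar> \<le> L * \<bar>h d - h c\<bar> + L * (d - c)"
  shows "abs_continuous_on_interval a b f"
  unfolding ac_iff
proof (intro allI impI)
  fix e :: real assume e: "0 < e"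
  define e' where "e' = e / (2 * (L + 1))"
  have e': "e' > 0" using e L by (simp add: e'_def)
  obtain d where d: "d > 0" and H: "\<And>n I. ivs a b n I \<Longrightarrow> (\<Sum>k<n. snd (I k) - fst (I k)) < d \<Longrightarrow>
      (\<Sum>k<n. \<bar>h (snd (I k)) - h (fst (I k))\<bar>) < e'"
    by (rule acE[OF h e'], blast)
  show "\<exists>d>0. \<forall>n I. ivs a b n I \<and> (\<Sum>k<n. snd (I k) - fst (I k)) < d \<longrightarrow>
      (\<Sum>k<n. \<bar>f (snd (I k)) - f (fst (I k))\<bar>) < e"
  proof (intro exI[of _ "min d e'"] conjI allI impI)
    fix n and I :: "nat \<Rightarrow> real \<times> real"
    assume A: "ivs a b n I \<and> (\<Sum>k<n. snd (I k) - fst (I k)) < min d e'"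
    then have s1: "(\<Sum>k<n. \<bar>h (snd (I k)) - h (fst (I k))\<bar>) < e'" by (intro H) auto
    have "(\<Sum>k<n. \<bar>f (snd (I k)) - f (fst (I k))\<bar>) \<le>
          (\<Sum>k<n. L * \<bar>h (snd (I k)) - h (fst (I k))\<bar> + L * (snd (I k) - fst (I k)))"
      by (rule sum_mono) (use A in \<open>auto intro!: bd simp: ivs_def\<close>)
    also have "\<dots> = L * (\<Sum>k<n. \<bar>h (snd (I k)) - h (fst (I k))\<bar>) + L * (\<Sum>k<n. snd (I k) - fst (I k))"
      by (simp add: sum.distrib sum_distrib_left)
    also have "\<dots> \<le> L * e' + L * e'"
      using s1 A L by (intro add_mono mult_left_mono) auto
    also have "\<dots> < e"
    proof -
      have "2 * L * e' = e * (L / (L + 1))" using L by (simp add: e'_def field_simps)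
      also have "\<dots> < e * 1" using e L by (intro mult_strict_left_mono) auto
      finally show ?thesis by simp
    qed
    finally show "(\<Sum>k<n. \<bar>f (snd (I k)) - f (fst (I k))\<bar>) < e" .
  qed (use d e' in auto)
qed

lemma ac_const: "abs_continuous_on_interval a b (\<lambda>_. c)"
  unfolding ac_iff by (intro allI impI exI[of _ 1]) simp

lemma ac_lipschitz:
  assumes L: "L \<ge> 0" and bd: "\<And>c d. a \<le> c \<Longrightarrow> c \<le> d \<Longrightarrow> d \<le> b \<Longrightarrow> \<bar>f d - f c\<bar> \<le> L * (d - c)"
  shows "abs_continuous_on_interval a b f"
  by (rule ac_lipschitz_rel[OF ac_const L]) (use bd in auto)

lemma ivs_sub: "ivs a' b' n I \<Longrightarrow> a \<le> a' \<Longrightarrow> b' \<le> b \<Longrightarrow> ivs a b n I"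
  unfolding ivs_def by force

lemma ac_sub:
  assumes "abs_continuous_on_interval a b f" "a \<le> a'" "b' \<le> b"
  shows "abs_continuous_on_interval a' b' f"
  unfolding ac_iff
proof (intro allI impI)
  fix e :: real assume "e > 0"
  from assms(1)[unfolded ac_iff, rule_format, OF this] obtain d where d: "d>0"
    "\<forall>n I. ivs a b n I \<and> (\<Sum>k<n. snd (I k) - fst (I k)) < d \<longrightarrow>
      (\<Sum>k<n. \<bar>f (snd (I k)) - f (fst (I k))\<bar>) < e" by blast
  show "\<exists>d>0. \<forall>n I. ivs a' b' n I \<and> (\<Sum>k<n. snd (I k) - fst (I k)) < d \<longrightarrow>
      (\<Sum>k<n. \<bar>f (snd (I k)) - f (fst (I k))\<bar>) < e"
    using d ivs_sub[OF _ assms(2,3)] by blast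
qed

lemma creep:
  fixes Q W :: "real \<Rightarrow> real"
  assumes ab: "a \<le> b" and Qc: "continuous_on {a..b} Q"
    and Wm: "\<And>x y. a \<le> x \<Longrightarrow> x \<le> y \<Longrightarrow> y \<le> b \<Longrightarrow> W x \<le> W y"
    and loc: "\<And>x. a \<le> x \<Longrightarrow> x < b \<Longrightarrow> \<exists>\<eta>>0. \<forall>y. x < y \<and> y < x + \<eta> \<and> y \<le> b \<longrightarrow> Q y - W y \<le> Q x - W x"
  shows "Q b - W b \<le> Q a - W a"
proof -
  define S where "S = {x\<in>{a..b}. Q x - W x \<le> Q a - W a}"
  define s where "s = Sup S"
  have aS: "a \<in> S" using ab by (simp add: S_def)
  have bdd: "bdd_above S" unfolding S_def by (rule bdd_aboveI[of _ b]) auto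
  have as: "a \<le> s" unfolding s_def using aS bdd by (rule cSup_upper)
  have sb: "s \<le> b" unfolding s_def using aS by (intro cSup_least) (auto simp: S_def)
  have sS: "Q s - W s \<le> Q a - W a"
  proof (rule field_le_epsilon)
    fix z :: real assume z: "z > 0"
    from Qc as sb obtain th where th: "th > 0" "\<And>x. x \<in> {a..b} \<Longrightarrow> dist x s < th \<Longrightarrow> dist (Q x) (Q s) < z"
      using z unfolding continuous_on_iff by (meson atLeastAtMost_iff)
    show "Q s - W s \<le> Q a - W a + z"
    proof (cases "s = a")
      case True then show ?thesis using z by simp
    next
      case False
      then have "s - th < s" using th by simp
      then have "s - th < Sup S" by (simp add: s_def)
      then obtain x where x: "x \<in> S" "s - th < x" using less_cSupE[of "s-th" S] aS by blast
      have xs: "x \<le> s" unfolding s_def using x bdd by (intro cSup_upper)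
      have xab: "x \<in> {a..b}" using x by (auto simp: S_def)
      have "dist (Q x) (Q s) < z" using th(2)[OF xab] xs x by (auto simp: dist_real_def)
      moreover have "W x \<le> W s" using xab xs sb by (intro Wm) auto
      moreover have "Q x - W x \<le> Q a - W a" using x by (auto simp: S_def)
      ultimately show ?thesis by (auto simp: dist_real_def)
    qed
  qed
  have "s = b"
  proof (rule ccontr)
    assume "s \<noteq> b"
    then have "s < b" using sb by simp
    then obtain \<eta> where eta: "\<eta> > 0" "\<And>y. s < y \<Longrightarrow> y < s + \<eta> \<Longrightarrow> y \<le> b \<Longrightarrow> Q y - W y \<le> Q s - W s"
      using loc[OF as] by blast
    define y where "y = min b (s + \<eta>/2)"
    have y: "s < y" "y < s + \<eta>" "y \<le> b" using eta \<open>s < b\<close> by (auto simp: y_def)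
    then have "y \<in> S" using eta(2)[OF y] sS as by (auto simp: S_def)
    then have "y \<le> s" unfolding s_def using bdd by (rule cSup_upper)
    then show False using y by simp
  qed
  then show ?thesis using sS by simp
qed



lemma ivs_length_le:
  assumes "ivs a b n I" "\<And>k. k < n \<Longrightarrow> {fst (I k)..snd (I k)} \<subseteq> U" "U \<in> sets lborel"
  shows "ennreal (\<Sum>k<n. snd (I k) - fst (I k)) \<le> emeasure lborel U"
proof -
  have le: "\<And>k. k < n \<Longrightarrow> fst (I k) \<le> snd (I k)" using assms(1) by (auto simp: ivs_def)
  have "ennreal (\<Sum>k<n. snd (I k) - fst (I k)) = (\<Sum>k<n. ennreal (snd (I k) - fst (I k)))"
    using le by (subst sum_ennreal) auto
  also have "\<dots> = (\<Sum>k<n. emeasure lborel {fst (I k)<..<snd (I k)})"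
    using le by (intro sum.cong) auto
  also have "\<dots> = emeasure lborel (\<Union>k\<in>{..<n}. {fst (I k)<..<snd (I k)})"
    using assms(1) by (intro sum_emeasure) (auto simp: disjoint_family_on_def ivs_def)
  also have "\<dots> \<le> emeasure lborel U"
    using assms(2,3) by (intro emeasure_mono) (force, simp)
  finally show ?thesis .
qed

lemma null_budget:
  assumes ac: "abs_continuous_on_interval a b f" and e: "e > 0" and N: "N \<in> null_sets lborel"
  obtains U V where "open U" "N \<subseteq> U"
    "\<And>x. a \<le> x \<Longrightarrow> x \<le> b \<Longrightarrow> 0 \<le> V x \<and> V x \<le> e"
    "\<And>x y. a \<le> x \<Longrightarrow> x \<le> y \<Longrightarrow> y \<le> b \<Longrightarrow> V x \<le> V y"
    "\<And>x y. a \<le> x \<Longrightarrow> x \<le> y \<Longrightarrow> y \<le> b \<Longrightarrow> {x..y} \<subseteq> U \<Longrightarrow> V x + \<bar>f y - f x\<bar> \<le> V y"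
proof -
  obtain d where d: "d > 0" and H: "\<And>n I. ivs a b n I \<Longrightarrow> (\<Sum>k<n. snd (I k) - fst (I k)) < d \<Longrightarrow>
      (\<Sum>k<n. \<bar>f (snd (I k)) - f (fst (I k))\<bar>) < e"
    by (rule acE[OF ac e], blast)
  have Nb: "N \<in> sets borel" using N by (simp add: null_sets_def)
  obtain U where U: "open U" "N \<subseteq> U" "emeasure lborel (U - N) < ennreal d"
    using outer_regular_lborel[OF Nb d] by blast
  have Usets: "U \<in> sets lborel" using U(1) by simp
  have "emeasure lborel U \<le> emeasure lborel ((U - N) \<union> N)" using Usets Nb by (intro emeasure_mono) auto
  also have "\<dots> \<le> emeasure lborel (U - N) + emeasure lborel N"
    using Usets Nb by (intro emeasure_subadditive) auto
  also have "\<dots> = emeasure lborel (U - N)" using N by (simp add: null_setsD1)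
  finally have Ud: "emeasure lborel U < ennreal d" using U(3) by simp
  define Coll where "Coll x = {(\<Sum>k<n. \<bar>f (snd (I k)) - f (fst (I k))\<bar>) | n I. ivs a x n I \<and> (\<forall>k<n. {fst (I k)..snd (I k)} \<subseteq> U)}" for x
  define V where "V x = Sup (Coll x)" for x
  have zero: "0 \<in> Coll x" for x unfolding Coll_def
    by (rule CollectI, rule exI[of _ 0], rule exI[of _ "\<lambda>_. (0,0)"]) (simp add: ivs_def)
  have bnd: "s < e" if sC: "s \<in> Coll x" and xb: "x \<le> b" for s x
  proof -
    obtain n I where s: "s = (\<Sum>k<n. \<bar>f (snd (I k)) - f (fst (I k))\<bar>)" and iv: "ivs a x n I"
      and sub: "\<forall>k<n. {fst (I k)..snd (I k)} \<subseteq> U" using sC unfolding Coll_def by blast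
    have ivb: "ivs a b n I" using ivs_sub[OF iv _ xb] by simp
    have "ennreal (\<Sum>k<n. snd (I k) - fst (I k)) < ennreal d"
      using ivs_length_le[OF ivb _ Usets] sub Ud by (meson le_less_trans)
    then have "(\<Sum>k<n. snd (I k) - fst (I k)) < d" using d
      by (cases "0 \<le> (\<Sum>k<n. snd (I k) - fst (I k))") (auto simp: ennreal_less_iff)
    then show ?thesis using H[OF ivb] s by simp
  qed
  have bdd: "bdd_above (Coll x)" if "x \<le> b" for x
    using bnd[OF _ that] by (intro bdd_aboveI[of _ e]) fastforce
  have mono: "Coll x \<subseteq> Coll y" if "x \<le> y" for x y
    unfolding Coll_def using ivs_sub[of a x _ _ a y] that by fastforce
  show ?thesis
  proof (rule that[of U V])
    show "open U" "N \<subseteq> U" using U by auto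
    fix x assume x: "a \<le> x" "x \<le> b"
    show "0 \<le> V x \<and> V x \<le> e"
    proof
      show "0 \<le> V x" unfolding V_def using zero bdd[OF x(2)] by (rule cSup_upper)
      show "V x \<le> e" unfolding V_def using zero bnd[OF _ x(2)]
        by (intro cSup_least) (auto intro: less_imp_le)
    qed
  next
    fix x y assume xy: "a \<le> x" "x \<le> y" "y \<le> b"
    show "V x \<le> V y" unfolding V_def using zero mono[OF xy(2)] bdd[OF xy(3)]
      by (intro cSup_subset_mono) auto
  next
    fix x y assume xy: "a \<le> x" "x \<le> y" "y \<le> b" and sub: "{x..y} \<subseteq> U"
    have "s \<le> V y - \<bar>f y - f x\<bar>" if sC: "s \<in> Coll x" for s
    proof -
      obtain n I where s: "s = (\<Sum>k<n. \<bar>f (snd (I k)) - f (fst (I k))\<bar>)" and iv: "ivs a x n I"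
        and subI: "\<forall>k<n. {fst (I k)..snd (I k)} \<subseteq> U" using sC unfolding Coll_def by blast
      define I' where "I' = I(n := (x, y))"
      have iv': "ivs a y (Suc n) I'"
        unfolding ivs_def
      proof (rule conjI; intro allI impI)
        fix k assume "k < Suc n"
        then show "a \<le> fst (I' k) \<and> fst (I' k) \<le> snd (I' k) \<and> snd (I' k) \<le> y"
          using iv xy by (cases "k = n") (auto simp: I'_def ivs_def less_Suc_eq intro: order.trans)
      next
        fix j k assume jk: "j < Suc n" "k < Suc n" "j \<noteq> k"
        have bx: "\<And>k. k < n \<Longrightarrow> snd (I k) \<le> x" using iv by (auto simp: ivs_def)
        show "{fst (I' j)<..<snd (I' j)} \<inter> {fst (I' k)<..<snd (I' k)} = {}"
        proof (cases "j = n")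
          case True
          then have "k < n" using jk by auto
          then show ?thesis using True bx[of k] jk by (auto simp: I'_def)
        next
          case False
          then have j: "j < n" using jk by auto
          show ?thesis
          proof (cases "k = n")
            case True
            then show ?thesis using j bx[of j] by (auto simp: I'_def)
          next
            case False
            then show ?thesis using j jk iv \<open>j \<noteq> n\<close> by (auto simp: I'_def ivs_def)
          qed
        qed
      qed
      have sub': "\<forall>k<Suc n. {fst (I' k)..snd (I' k)} \<subseteq> U"
        using subI sub by (auto simp: I'_def less_Suc_eq)
      have "(\<Sum>k<Suc n. \<bar>f (snd (I' k)) - f (fst (I' k))\<bar>) \<in> Coll y"
        unfolding Coll_def using iv' sub' by blast
      then have "(\<Sum>k<Suc n. \<bar>f (snd (I' k)) - f (fst (I' k))\<bar>) \<le> V y"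
        unfolding V_def using bdd[OF xy(3)] by (rule cSup_upper)
      moreover have "(\<Sum>k<Suc n. \<bar>f (snd (I' k)) - f (fst (I' k))\<bar>) = s + \<bar>f y - f x\<bar>"
        by (simp add: I'_def s)
      ultimately show ?thesis by simp
    qed
    then have "V x \<le> V y - \<bar>f y - f x\<bar>" unfolding V_def using zero by (intro cSup_least) auto
    then show "V x + \<bar>f y - f x\<bar> \<le> V y" by simp
  qed
qed



lemma count_levels_le:
  fixes v e :: real assumes e: "e > 0" and v: "v \<ge> 0"
  shows "(\<Sum>j. (if real (Suc j) * e < v then ennreal e else 0)) \<le> ennreal v"
proof -
  define k where "k = nat \<lfloor>v / e\<rfloor>"
  have zero: "(if real (Suc j) * e < v then ennreal e else 0) = 0" if "j \<notin> {..<k}" for j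
  proof -
    have "k \<le> j" using that by simp
    have "v / e < real_of_int \<lfloor>v / e\<rfloor> + 1" by linarith
    also have "\<dots> = real k + 1" using v e by (simp add: k_def)
    also have "\<dots> \<le> real (Suc j)" using \<open>k \<le> j\<close> by simp
    finally have "v < real (Suc j) * e" using e by (simp add: divide_less_eq)
    then show ?thesis by simp
  qed
  have "(\<Sum>j. (if real (Suc j) * e < v then ennreal e else 0)) = (\<Sum>j<k. (if real (Suc j) * e < v then ennreal e else 0))"
    by (rule suminf_finite) (use zero in auto)
  also have "\<dots> \<le> (\<Sum>j<k. ennreal e)"
    by (intro sum_mono) auto
  also have "\<dots> = ennreal (real k * e)" using e by (simp add: ennreal_mult ennreal_of_nat_eq_real_of_nat)
  also have "\<dots> \<le> ennreal v"
  proof (intro ennreal_leI)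
    have "real k = of_int \<lfloor>v / e\<rfloor>" using v e by (simp add: k_def)
    also have "\<dots> \<le> v / e" by simp
    finally show "real k * e \<le> v" using e by (simp add: le_divide_eq)
  qed
  finally show ?thesis .
qed

lemma level_budget:
  assumes ab: "a \<le> b" and gm: "g \<in> borel_measurable borel" and g0: "\<And>t. t \<in> {a..b} \<Longrightarrow> g t \<ge> 0"
    and e: "e > 0" and fin: "(\<integral>\<^sup>+t\<in>{a..b}. ennreal (g t) \<partial>lborel) < \<infinity>"
  shows "\<exists>\<Psi>. (\<forall>x y. a \<le> x \<longrightarrow> x \<le> y \<longrightarrow> y \<le> b \<longrightarrow> \<Psi> x \<le> \<Psi> y) \<and>
   \<Psi> a \<ge> 0 \<and>
   \<Psi> b \<le> enn2real (\<integral>\<^sup>+t\<in>{a..b}. ennreal (g t) \<partial>lborel) + e \<and>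
   (\<forall>x. a \<le> x \<longrightarrow> x < b \<longrightarrow> (\<exists>\<eta>>0. \<forall>y. x < y \<and> y < x + \<eta> \<and> y \<le> b \<longrightarrow> (g x - e) * (y - x) \<le> \<Psi> y - \<Psi> x))"
proof -
  define IG where "IG = (\<integral>\<^sup>+t\<in>{a..b}. ennreal (g t) \<partial>lborel)"
  define E where "E j = {t \<in> {a..b}. real (Suc j) * e < g t}" for j
  have Eb: "E j \<in> sets borel" for j unfolding E_def using gm by measurable
  have "\<forall>j. \<exists>U. open U \<and> E j \<subseteq> U \<and> emeasure lborel (U - E j) < ennreal ((1/2)^Suc j)"
    using outer_regular_lborel[OF Eb] by (metis zero_less_divide_1_iff zero_less_numeral zero_less_power)
  then obtain U where U: "\<And>j. open (U j)" "\<And>j. E j \<subseteq> U j" "\<And>j. emeasure lborel (U j - E j) < ennreal ((1/2)^Suc j)"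
    by metis
  have Ub: "U j \<in> sets borel" for j using U(1) by simp
  define S where "S x = (\<Sum>j. ennreal e * emeasure lborel (U j \<inter> {a..x}))" for x
  define \<Psi> where "\<Psi> x = enn2real (S x)" for x
  have Smono: "S x \<le> S y" if "x \<le> y" for x y
    unfolding S_def using that by (intro suminf_le mult_left_mono emeasure_mono) (auto simp: Ub)
  have "S b \<le> (\<Sum>j. ennreal e * emeasure lborel (E j) + ennreal e * ennreal ((1/2)^Suc j))"
    unfolding S_def
  proof (intro suminf_le, goal_cases)
    case (1 j)
    have "emeasure lborel (U j \<inter> {a..b}) \<le> emeasure lborel (E j \<union> (U j - E j))"
      using Eb Ub by (intro emeasure_mono) (auto simp: E_def)
    also have "\<dots> \<le> emeasure lborel (E j) + emeasure lborel (U j - E j)"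
      using Eb Ub by (intro emeasure_subadditive) auto
    also have "\<dots> \<le> emeasure lborel (E j) + ennreal ((1/2)^Suc j)"
      using U(3)[of j] by (intro add_left_mono) auto
    finally have "emeasure lborel (U j \<inter> {a..b}) \<le> emeasure lborel (E j) + ennreal ((1/2)^Suc j)" .
    then have "ennreal e * emeasure lborel (U j \<inter> {a..b}) \<le> ennreal e * (emeasure lborel (E j) + ennreal ((1/2)^Suc j))"
      by (rule mult_left_mono) simp
    then show ?case by (simp only: distrib_left)
  qed auto
  also have "\<dots> = (\<Sum>j. ennreal e * emeasure lborel (E j)) + (\<Sum>j. ennreal e * ennreal ((1/2)^Suc j))"
    by (rule suminf_add[symmetric]) auto
  also have "(\<Sum>j. ennreal e * ennreal ((1/2)^Suc j)) = ennreal e"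
  proof -
    have "(\<Sum>j. ennreal e * ennreal ((1/2)^Suc j)) = (\<Sum>j. ennreal (e * (1/2)^Suc j))"
      using e by (intro arg_cong[where f=suminf] ext) (rule ennreal_mult[symmetric], auto)
    also have "\<dots> = ennreal (\<Sum>j. e * (1/2)^Suc j)"
      using e power_half_series by (intro suminf_ennreal2) (auto intro!: summable_mult sums_summable)
    also have "(\<Sum>j. e * (1/2)^Suc j) = e * 1"
      using power_half_series by (subst suminf_mult) (auto simp: sums_iff)
    finally show ?thesis by simp
  qed
  also have "(\<Sum>j. ennreal e * emeasure lborel (E j)) \<le> IG"
  proof -
    have "(\<Sum>j. ennreal e * emeasure lborel (E j)) = (\<Sum>j. \<integral>\<^sup>+t. ennreal e * indicator (E j) t \<partial>lborel)"
      using Eb by (simp add: nn_integral_cmult_indicator)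
    also have "\<dots> = (\<integral>\<^sup>+t. (\<Sum>j. ennreal e * indicator (E j) t) \<partial>lborel)"
      using Eb by (intro nn_integral_suminf[symmetric]) auto
    also have "\<dots> \<le> IG" unfolding IG_def
    proof (intro nn_integral_mono)
      fix t
      show "(\<Sum>j. ennreal e * indicator (E j) t) \<le> ennreal (g t) * indicator {a..b} t"
      proof (cases "t \<in> {a..b}")
        case True
        have "(\<Sum>j. ennreal e * indicator (E j) t) = (\<Sum>j. if real (Suc j) * e < g t then ennreal e else 0)"
          using True by (intro arg_cong[where f=suminf] ext) (simp add: E_def indicator_def)
        also have "\<dots> \<le> ennreal (g t)" using count_levels_le[OF e g0[OF True]] by simp
        finally show ?thesis using True by simp
      next
        case False
        then have "\<And>j. t \<notin> E j" by (auto simp: E_def)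
        then show ?thesis by simp
      qed
    qed
    finally show ?thesis .
  qed
  finally have Sb: "S b \<le> IG + ennreal e" by (simp add: add_right_mono)
  have IGfin: "IG < top" using fin by (simp add: IG_def)
  have Sfin: "S x < top" if "x \<le> b" for x
    using Smono[OF that] Sb IGfin by (simp add: order.strict_trans1 ennreal_add_less_top)
  show ?thesis
  proof (intro exI[of _ \<Psi>] conjI allI impI)
    fix x y assume "a \<le> x" "x \<le> y" "y \<le> b"
    then show "\<Psi> x \<le> \<Psi> y" unfolding \<Psi>_def using Smono Sfin by (intro enn2real_mono) auto
  next
    show "\<Psi> a \<ge> 0" by (simp add: \<Psi>_def)
  next
    have "\<Psi> b \<le> enn2real (IG + ennreal e)"
      unfolding \<Psi>_def using Sb IGfin by (intro enn2real_mono) (auto simp: ennreal_add_less_top)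
    also have "\<dots> = enn2real IG + e" using IGfin e by (simp add: enn2real_plus)
    finally show "\<Psi> b \<le> enn2real (\<integral>\<^sup>+t\<in>{a..b}. ennreal (g t) \<partial>lborel) + e" by (simp add: IG_def)
  next
    fix x assume x: "a \<le> x" "x < b"
    define m where "m = nat \<lceil>g x / e\<rceil> - 1"
    have inE: "x \<in> E j" if "j < m" for j
    proof -
      have "int (Suc j) < \<lceil>g x / e\<rceil>" using that by (simp add: m_def)
      then have "real (Suc j) < g x / e" by (simp add: less_ceiling_iff)
      then show ?thesis using x e by (simp add: E_def pos_less_divide_eq)
    qed
    have me: "g x - e \<le> real m * e"
    proof -
      have "g x / e \<le> of_int \<lceil>g x / e\<rceil>" by simp
      moreover have "0 \<le> g x" using g0 x by simp
      ultimately have "g x / e - 1 \<le> real m"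
      proof (cases "\<lceil>g x / e\<rceil> \<ge> 1")
        case True
        then have "nat \<lceil>g x / e\<rceil> \<ge> 1" by linarith
        then have "real m = real (nat \<lceil>g x / e\<rceil>) - 1" unfolding m_def by (simp add: of_nat_diff)
        also have "real (nat \<lceil>g x / e\<rceil>) = of_int \<lceil>g x / e\<rceil>" using True by simp
        finally show ?thesis using \<open>g x / e \<le> of_int \<lceil>g x / e\<rceil>\<close> by simp
      next
        case False
        then have "g x / e \<le> 0" by (meson ceiling_le_zero linorder_not_le zero_less_ceiling int_one_le_iff_zero_less)
        then show ?thesis by simp
      qed
      then show ?thesis using e by (simp add: field_simps)
    qed
    have "open (\<Inter>j\<in>{..<m}. U j)" using U(1) by (intro open_INT) auto
    moreover have "x \<in> (\<Inter>j\<in>{..<m}. U j)" using inE U(2) by blast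
    ultimately obtain \<eta> where eta: "\<eta> > 0" "ball x \<eta> \<subseteq> (\<Inter>j\<in>{..<m}. U j)"
      by (meson openE)
    show "\<exists>\<eta>>0. \<forall>y. x < y \<and> y < x + \<eta> \<and> y \<le> b \<longrightarrow> (g x - e) * (y - x) \<le> \<Psi> y - \<Psi> x"
    proof (intro exI[of _ \<eta>] conjI allI impI)
      fix y assume y: "x < y \<and> y < x + \<eta> \<and> y \<le> b"
      have sub: "{x<..y} \<subseteq> U j" if "j < m" for j
        using eta(2) y that by (force simp: dist_real_def)
      have split: "emeasure lborel (U j \<inter> {a..y}) = emeasure lborel (U j \<inter> {a..x}) + emeasure lborel (U j \<inter> {x<..y})" for j
      proof -
        have "U j \<inter> {a..y} = (U j \<inter> {a..x}) \<union> (U j \<inter> {x<..y})" using x y by auto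
        moreover have "(U j \<inter> {a..x}) \<inter> (U j \<inter> {x<..y}) = {}" by auto
        ultimately show ?thesis using Ub by (metis plus_emeasure sets.Int sets_lborel atLeastAtMost_borel greaterThanAtMost_borel)
      qed
      have "S y = (\<Sum>j. ennreal e * emeasure lborel (U j \<inter> {a..x}) + ennreal e * emeasure lborel (U j \<inter> {x<..y}))"
        unfolding S_def by (simp add: split distrib_left)
      also have "\<dots> = S x + (\<Sum>j. ennreal e * emeasure lborel (U j \<inter> {x<..y}))"
        unfolding S_def by (rule suminf_add[symmetric]) auto
      finally have Sy: "S y = S x + (\<Sum>j. ennreal e * emeasure lborel (U j \<inter> {x<..y}))" .
      have "(\<Sum>j<m. ennreal e * emeasure lborel (U j \<inter> {x<..y})) \<le> (\<Sum>j. ennreal e * emeasure lborel (U j \<inter> {x<..y}))"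
        by (intro sum_le_suminf) auto
      moreover have "(\<Sum>j<m. ennreal e * emeasure lborel (U j \<inter> {x<..y})) = ennreal (real m * e * (y - x))"
      proof -
        have "(\<Sum>j<m. ennreal e * emeasure lborel (U j \<inter> {x<..y})) = (\<Sum>j<m. ennreal (e * (y - x)))"
          using sub y e by (intro sum.cong) (auto simp: Int_absorb1 ennreal_mult)
        then show ?thesis using y e by (simp add: ennreal_mult mult.assoc ennreal_of_nat_eq_real_of_nat)
      qed
      ultimately have "S x + ennreal (real m * e * (y - x)) \<le> S y" using Sy by (simp add: add_left_mono)
      then have "enn2real (S x + ennreal (real m * e * (y - x))) \<le> enn2real (S y)"
        using Sfin[of y] y by (intro enn2real_mono) auto
      moreover have "enn2real (S x + ennreal (real m * e * (y - x))) = \<Psi> x + real m * e * (y - x)"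
        unfolding \<Psi>_def using Sfin[of x] x y e by (subst enn2real_plus) auto
      ultimately have "real m * e * (y - x) \<le> \<Psi> y - \<Psi> x" by (simp add: \<Psi>_def)
      moreover have "(g x - e) * (y - x) \<le> real m * e * (y - x)"
        using me y by (intro mult_right_mono) auto
      ultimately show "(g x - e) * (y - x) \<le> \<Psi> y - \<Psi> x" by linarith
    qed (use eta in auto)
  qed
qed



lemma ftc_ineq:
  assumes ab: "a \<le> b" and ac: "abs_continuous_on_interval a b f"
    and gm: "g \<in> borel_measurable borel" and g0: "\<And>t. t \<in> {a..b} \<Longrightarrow> g t \<ge> 0"
    and der: "AE t in lborel. t \<in> {a..b} \<longrightarrow> (\<exists>d. (f has_real_derivative d) (at t within {a..b}) \<and> d \<le> g t)"
  shows "ennreal (f b - f a) \<le> (\<integral>\<^sup>+t\<in>{a..b}. ennreal (g t) \<partial>lborel)"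
proof (cases "(\<integral>\<^sup>+t\<in>{a..b}. ennreal (g t) \<partial>lborel) < \<infinity>")
  case False
  then have "(\<integral>\<^sup>+t\<in>{a..b}. ennreal (g t) \<partial>lborel) = top" using False by (simp add: not_less top_unique)
  then show ?thesis by simp
next
  case fin: True
  define IG where "IG = enn2real (\<integral>\<^sup>+t\<in>{a..b}. ennreal (g t) \<partial>lborel)"
  have key: "f b - f a \<le> IG + e * (2 * (b - a) + 2)" if e: "e > 0" for e
  proof -
    obtain N where N: "{t \<in> space lborel. \<not> (t \<in> {a..b} \<longrightarrow> (\<exists>d. (f has_real_derivative d) (at t within {a..b}) \<and> d \<le> g t))} \<subseteq> N"
      "emeasure lborel N = 0" "N \<in> sets lborel"
      using der by (rule AE_E)
    have Nn: "N \<in> null_sets lborel" using N by (simp add: null_sets_def)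
    obtain U V where U: "open U" "N \<subseteq> U"
      and V0: "\<And>x. a \<le> x \<Longrightarrow> x \<le> b \<Longrightarrow> 0 \<le> V x \<and> V x \<le> e"
      and Vm: "\<And>x y. a \<le> x \<Longrightarrow> x \<le> y \<Longrightarrow> y \<le> b \<Longrightarrow> V x \<le> V y"
      and Vs: "\<And>x y. a \<le> x \<Longrightarrow> x \<le> y \<Longrightarrow> y \<le> b \<Longrightarrow> {x..y} \<subseteq> U \<Longrightarrow> V x + \<bar>f y - f x\<bar> \<le> V y"
      by (rule null_budget[OF ac e Nn]) blast
    obtain \<Psi> where PP: "(\<forall>x y. a \<le> x \<longrightarrow> x \<le> y \<longrightarrow> y \<le> b \<longrightarrow> \<Psi> x \<le> \<Psi> y) \<and>
   \<Psi> a \<ge> 0 \<and>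
   \<Psi> b \<le> enn2real (\<integral>\<^sup>+t\<in>{a..b}. ennreal (g t) \<partial>lborel) + e \<and>
   (\<forall>x. a \<le> x \<longrightarrow> x < b \<longrightarrow> (\<exists>\<eta>>0. \<forall>y. x < y \<and> y < x + \<eta> \<and> y \<le> b \<longrightarrow> (g x - e) * (y - x) \<le> \<Psi> y - \<Psi> x))"
      using level_budget[OF ab gm _ e fin] g0 by blast
    have Pm: "\<And>x y. a \<le> x \<Longrightarrow> x \<le> y \<Longrightarrow> y \<le> b \<Longrightarrow> \<Psi> x \<le> \<Psi> y" using PP by blast
    have P0: "\<Psi> a \<ge> 0" using PP by blast
    have Pb: "\<Psi> b \<le> IG + e" using PP by (simp add: IG_def)
    have Ps: "\<And>x. a \<le> x \<Longrightarrow> x < b \<Longrightarrow> \<exists>\<eta>>0. \<forall>y. x < y \<and> y < x + \<eta> \<and> y \<le> b \<longrightarrow> (g x - e) * (y - x) \<le> \<Psi> y - \<Psi> x"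
      using PP by blast
    define Q where "Q x = f x - 2 * e * x" for x
    define W where "W x = \<Psi> x + V x" for x
    have "Q b - W b \<le> Q a - W a"
    proof (rule creep[OF ab])
      show "continuous_on {a..b} Q" unfolding Q_def
        using ac_continuous[OF ac] by (intro continuous_intros)
      show "W x \<le> W y" if "a \<le> x" "x \<le> y" "y \<le> b" for x y
        unfolding W_def using Pm[OF that] Vm[OF that] by simp
    next
      fix x assume x: "a \<le> x" "x < b"
      show "\<exists>\<eta>>0. \<forall>y. x < y \<and> y < x + \<eta> \<and> y \<le> b \<longrightarrow> Q y - W y \<le> Q x - W x"
      proof (cases "x \<in> N")
        case True
        then have "x \<in> U" using U by auto
        then obtain r where r: "r > 0" "ball x r \<subseteq> U" using U(1) openE by blast
        show ?thesis
        proof (intro exI[of _ r] conjI allI impI)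
          fix y assume y: "x < y \<and> y < x + r \<and> y \<le> b"
          have "{x..y} \<subseteq> U" using r y by (force simp: dist_real_def)
          then have "V x + \<bar>f y - f x\<bar> \<le> V y" using Vs x y by auto
          moreover have "\<Psi> x \<le> \<Psi> y" using Pm x y by auto
          moreover have "e * x \<le> e * y" using e y by simp
          moreover have "f y - f x \<le> \<bar>f y - f x\<bar>" by simp
          ultimately show "Q y - W y \<le> Q x - W x" unfolding Q_def W_def by linarith
        qed (use r in auto)
      next
        case False
        then obtain d where d: "(f has_real_derivative d) (at x within {a..b})" "d \<le> g x"
        proof -
          have "x \<notin> {t \<in> space lborel. \<not> (t \<in> {a..b} \<longrightarrow> (\<exists>d. (f has_real_derivative d) (at t within {a..b}) \<and> d \<le> g t))}"
            using N(1) False by blast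
          then have "\<exists>d. (f has_real_derivative d) (at x within {a..b}) \<and> d \<le> g x" using x by simp
          then show ?thesis using that by blast
        qed
        obtain \<eta>1 where eta1: "\<eta>1 > 0" "\<And>y. y \<in> {a..b} \<Longrightarrow> norm (y - x) < \<eta>1 \<Longrightarrow> norm (f y - f x - d * (y - x)) \<le> e * norm (y - x)"
          using d(1) e unfolding has_field_derivative_def has_derivative_within_alt by blast
        obtain \<eta>2 where eta2: "\<eta>2 > 0" "\<And>y. x < y \<Longrightarrow> y < x + \<eta>2 \<Longrightarrow> y \<le> b \<Longrightarrow> (g x - e) * (y - x) \<le> \<Psi> y - \<Psi> x"
          using Ps[OF x] by blast
        show ?thesis
        proof (intro exI[of _ "min \<eta>1 \<eta>2"] conjI allI impI)
          fix y assume y: "x < y \<and> y < x + min \<eta>1 \<eta>2 \<and> y \<le> b"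
          have "\<bar>f y - f x - d * (y - x)\<bar> \<le> e * (y - x)" using eta1(2)[of y] x y by auto
          then have "f y - f x - d * (y - x) \<le> e * (y - x)" by linarith
          moreover have "d * (y - x) \<le> g x * (y - x)" using d(2) y by (intro mult_right_mono) auto
          moreover have "(g x - e) * (y - x) \<le> \<Psi> y - \<Psi> x" using eta2(2)[of y] y by auto
          moreover have "V x \<le> V y" using Vm x y by auto
          ultimately show "Q y - W y \<le> Q x - W x" unfolding Q_def W_def by (simp add: algebra_simps)
        qed (use eta1 eta2 in auto)
      qed
    qed
    then have "f b - f a \<le> 2 * e * (b - a) + (\<Psi> b - \<Psi> a) + (V b - V a)"
      unfolding Q_def W_def by (simp add: algebra_simps)
    also have "\<dots> \<le> 2 * e * (b - a) + (IG + e) + e"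
      using Pb P0 V0[of a] V0[of b] ab by simp
    finally show ?thesis by (simp add: algebra_simps)
  qed
  have "f b - f a \<le> IG"
  proof (rule field_le_epsilon)
    fix z :: real assume z: "z > 0"
    define c where "c = 2 * (b - a) + 2"
    have c: "c > 0" using ab by (simp add: c_def)
    have "f b - f a \<le> IG + (z / c) * c"
      using key[of "z / c"] z c unfolding c_def by simp
    also have "(z / c) * c = z" using c by simp
    finally show "f b - f a \<le> IG + z" .
  qed
  then have "ennreal (f b - f a) \<le> ennreal IG" by (rule ennreal_leI)
  also have "ennreal IG = (\<integral>\<^sup>+t\<in>{a..b}. ennreal (g t) \<partial>lborel)"
    unfolding IG_def using fin by (simp add: ennreal_enn2real)
  finally show ?thesis .
qed



lemma ric_facts:
  assumes "riccati_solution_scalar A B \<Sigma>0 C X"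
  shows "set_borel_measurable lborel {0..} C" "\<And>b. b \<ge> 0 \<Longrightarrow> abs_continuous_on_interval 0 b X"
    "X 0 = \<Sigma>0" "\<And>t. t \<ge> 0 \<Longrightarrow> X t > 0"
    "AE t in lborel. t \<ge> 0 \<longrightarrow>
        (X has_real_derivative (A * X t + X t * A - X t * C t * C t * X t + B * B)) (at t)"
  using assms unfolding riccati_solution_scalar_def abs_continuous_on_halfline_def by auto

lemma ric_bounded:
  assumes ric: "riccati_solution_scalar A B \<Sigma>0 C X" and A: "A < 0"
  shows "\<And>t. t \<ge> 0 \<Longrightarrow> X t \<le> max \<Sigma>0 (-(B*B)/(2*A))"
proof (rule ccontr)
  fix t :: real assume t: "t \<ge> 0" and nt: "\<not> X t \<le> max \<Sigma>0 (-(B*B)/(2*A))"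
  define M where "M = max \<Sigma>0 (-(B*B)/(2*A))"
  have XtM: "X t > M" using nt unfolding M_def by linarith
  note F = ric_facts[OF ric]
  have cont: "continuous_on {0..t} X" using F(2)[OF t] by (rule ac_continuous)
  define S where "S = {0..t} \<inter> X -` {..M}"
  have clS: "closed S" unfolding S_def using cont by (intro continuous_closed_preimage) auto
  have S0: "0 \<in> S" using t F(3) by (simp add: S_def M_def)
  have bddS: "bdd_above S" unfolding S_def by (rule bdd_aboveI[of _ t]) auto
  define s where "s = Sup S"
  have sS: "s \<in> S" unfolding s_def using S0 bddS clS by (intro closed_contains_Sup) auto
  then have s: "0 \<le> s" "s \<le> t" "X s \<le> M" by (auto simp: S_def)
  have gt: "X u > M" if "s < u" "u \<le> t" for u
  proof (rule ccontr)
    assume "\<not> X u > M"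
    then have "u \<in> S" using that s by (auto simp: S_def)
    then have "u \<le> s" unfolding s_def using bddS by (rule cSup_upper)
    then show False using that by simp
  qed
  have st: "s \<le> t" using s by simp
  have M': "-(B*B)/(2*A) \<le> M" by (simp add: M_def)
  have "ennreal (X t - X s) \<le> (\<integral>\<^sup>+u\<in>{s..t}. ennreal ((\<lambda>_. 0::real) u) \<partial>lborel)"
  proof (rule ftc_ineq[OF st])
    show "abs_continuous_on_interval s t X" using ac_sub[OF F(2)[OF t], of s t] s by simp
    show "(\<lambda>_. 0::real) \<in> borel_measurable borel" by simp
    show "\<And>u. u \<in> {s..t} \<Longrightarrow> (0::real) \<le> 0" by simp
    show "AE u in lborel. u \<in> {s..t} \<longrightarrow> (\<exists>d. (X has_real_derivative d) (at u within {s..t}) \<and> d \<le> 0)"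
    proof -
      have pw: "u \<in> {s..t} \<longrightarrow> (\<exists>d. (X has_real_derivative d) (at u within {s..t}) \<and> d \<le> 0)"
        if du: "u \<ge> 0 \<longrightarrow> (X has_real_derivative (A * X u + X u * A - X u * C u * C u * X u + B * B)) (at u)"
          and us: "u \<noteq> s" for u
      proof
        assume u: "u \<in> {s..t}"
        then have "s < u" using us by auto
        then have Xu: "X u > M" using gt u by auto
        have "A * X u \<le> A * (-(B*B)/(2*A))" using A Xu M' by (intro mult_left_mono_neg) auto
        also have "A * (-(B*B)/(2*A)) = -(B*B)/2" using A by (simp add: field_simps)
        finally have 1: "A * X u \<le> -(B*B)/2" .
        have "X u * C u * C u * X u = (X u * C u)\<^sup>2" by (simp add: power2_eq_square algebra_simps)
        then have 2: "X u * C u * C u * X u \<ge> 0" by simp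
        have le: "A * X u + X u * A - X u * C u * C u * X u + B * B \<le> 0" using 1 2 by (simp add: algebra_simps)
        have "u \<ge> 0" using u s by auto
        then have "(X has_real_derivative (A * X u + X u * A - X u * C u * C u * X u + B * B)) (at u)"
          using du by blast
        then have "(X has_real_derivative (A * X u + X u * A - X u * C u * C u * X u + B * B)) (at u within {s..t})"
          by (rule has_field_derivative_at_within)
        then show "\<exists>d. (X has_real_derivative d) (at u within {s..t}) \<and> d \<le> 0" using le by blast
      qed
      have "AE u in lborel. (u \<ge> 0 \<longrightarrow> (X has_real_derivative (A * X u + X u * A - X u * C u * C u * X u + B * B)) (at u)) \<and> u \<noteq> s"
        using F(5) AE_lborel_singleton[of s] by (rule eventually_conj)
      then show ?thesis by (rule eventually_mono) (use pw in blast)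
    qed
  qed
  then have "X t - X s \<le> 0" by (simp add: ennreal_eq_0_iff)
  then show False using s XtM by simp
qed



lemma ln_lip:
  fixes x y m :: real assumes m: "m > 0" "x \<ge> m" "y \<ge> m"
  shows "\<bar>ln x - ln y\<bar> \<le> \<bar>x - y\<bar> / m"
proof -
  have a: "ln x - ln y \<le> \<bar>x - y\<bar> / m" if "x \<ge> m" "y \<ge> m" for x y
  proof -
    have xy: "x > 0" "y > 0" using that m by auto
    have "ln x - ln y = ln (x / y)" using xy by (simp add: ln_div)
    also have "\<dots> \<le> x / y - 1" using xy by (intro ln_le_minus_one) auto
    also have "\<dots> = (x - y) / y" using xy by (simp add: field_simps)
    also have "\<dots> \<le> \<bar>x - y\<bar> / y" using xy by (intro divide_right_mono) auto
    also have "\<dots> \<le> \<bar>x - y\<bar> / m" using xy that m by (intro divide_left_mono) auto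
    finally show ?thesis .
  qed
  show ?thesis using a[of x y] a[of y x] m by (auto simp: abs_le_iff abs_minus_commute)
qed

lemma ric_integral_ineq:
  assumes ric: "riccati_solution_scalar A B \<Sigma>0 C X" and A: "A < 0" and T: "T > 0"
  shows "ennreal (ln \<Sigma>0 - ln (max \<Sigma>0 (-(B*B)/(2*A))) + 2*A*T + B*B * integral {0..T} (\<lambda>s. 1 / X s))
          \<le> (\<integral>\<^sup>+ t\<in>{0..T}. ennreal (C t * X t * C t) \<partial>lborel)"
proof -
  define M where "M = max \<Sigma>0 (-(B*B)/(2*A))"
  note F = ric_facts[OF ric]
  have T0: "0 \<le> T" using T by simp
  have acX: "abs_continuous_on_interval 0 T X" using F(2)[OF T0] .
  have cont: "continuous_on {0..T} X" using acX by (rule ac_continuous)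
  have pos: "\<And>u. u \<in> {0..T} \<Longrightarrow> X u > 0" using F(4) by auto
  have pos0: "\<And>u. 0 \<le> u \<Longrightarrow> u \<le> T \<Longrightarrow> X u \<ge> 0" using pos by (simp add: less_imp_le)
  have nz: "\<And>u. u \<in> {0..T} \<Longrightarrow> X u \<noteq> 0" using pos by (metis less_irrefl)
  obtain x0 where x0: "x0 \<in> {0..T}" "\<And>y. y \<in> {0..T} \<Longrightarrow> X x0 \<le> X y"
    using continuous_attains_inf[OF compact_Icc _ cont] T by auto
  define m where "m = X x0"
  have m: "m > 0" using pos x0 by (simp add: m_def)
  have Xm: "\<And>u. u \<in> {0..T} \<Longrightarrow> m \<le> X u" using x0 by (simp add: m_def)
  have inv_le: "1 / X u \<le> 1 / m" if "0 \<le> u" "u \<le> T" for u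
  proof -
    have "m \<le> X u" using Xm that by auto
    moreover have "0 < X u * m" using \<open>m \<le> X u\<close> m by simp
    ultimately show ?thesis by (intro divide_left_mono) auto
  qed
  have contI: "continuous_on {0..T} (\<lambda>s. 1 / X s)"
    using cont pos by (intro continuous_intros) (use nz in auto)
  have intI: "(\<lambda>s. 1 / X s) integrable_on {0..T}" using contI by (rule integrable_continuous_interval)
  define J where "J u = integral {0..u} (\<lambda>s. 1 / X s)" for u
  define FF where "FF = (\<lambda>u. - ln (X u) + 2*A*u + B*B * J u)"
  define L where "L = max (1/m) (2*\<bar>A\<bar> + B*B/m)"
  have L0: "L \<ge> 0" using m by (simp add: L_def le_max_iff_disj)
  have Jdiff: "J d - J c = integral {c..d} (\<lambda>s. 1 / X s)" and Jbd: "0 \<le> J d - J c" "J d - J c \<le> (d - c) / m"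
    if cd: "0 \<le> c" "c \<le> d" "d \<le> T" for c d
  proof -
    have intd: "(\<lambda>s. 1 / X s) integrable_on {0..d}" by (rule integrable_on_subinterval[OF intI]) (use cd in auto)
    have intcd: "(\<lambda>s. 1 / X s) integrable_on {c..d}" by (rule integrable_on_subinterval[OF intI]) (use cd in auto)
    show *: "J d - J c = integral {c..d} (\<lambda>s. 1 / X s)"
      unfolding J_def using Henstock_Kurzweil_Integration.integral_combine[OF cd(1,2) intd] by simp
    show "0 \<le> J d - J c" unfolding * using intcd cd by (intro integral_nonneg) (auto intro: pos0)
    have "integral {c..d} (\<lambda>s. 1 / X s) \<le> integral {c..d} (\<lambda>s. 1 / m)"
      using intcd cd by (intro integral_le) (auto intro: inv_le)
    also have "\<dots> = (d - c) / m" using cd by simp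
    finally show "J d - J c \<le> (d - c) / m" unfolding * .
  qed
  have acF: "abs_continuous_on_interval 0 T FF"
  proof (rule ac_lipschitz_rel[OF acX L0])
    fix c d assume cd: "0 \<le> c" "c \<le> d" "d \<le> T"
    have "\<bar>FF d - FF c\<bar> = \<bar>- (ln (X d) - ln (X c)) + 2*A*(d - c) + B*B*(J d - J c)\<bar>"
      unfolding FF_def by (simp add: algebra_simps)
    also have "\<dots> \<le> \<bar>ln (X d) - ln (X c)\<bar> + \<bar>2*A*(d - c)\<bar> + \<bar>B*B*(J d - J c)\<bar>"
      by (rule order.trans[OF abs_triangle_ineq]) (simp add: abs_triangle_ineq)
    also have "\<dots> \<le> \<bar>X d - X c\<bar> / m + 2*\<bar>A\<bar>*(d - c) + B*B*((d - c)/m)"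
    proof (intro add_mono)
      show "\<bar>ln (X d) - ln (X c)\<bar> \<le> \<bar>X d - X c\<bar> / m" using Xm cd m by (intro ln_lip) auto
      show "\<bar>2*A*(d - c)\<bar> \<le> 2*\<bar>A\<bar>*(d - c)" using cd by (simp add: abs_mult)
      have "\<bar>B*B*(J d - J c)\<bar> = B*B*(J d - J c)" using Jbd[OF cd] by (simp add: abs_mult)
      also have "\<dots> \<le> B*B*((d - c)/m)" using Jbd[OF cd] by (intro mult_left_mono) auto
      finally show "\<bar>B*B*(J d - J c)\<bar> \<le> B*B*((d - c)/m)" .
    qed
    also have "\<dots> = (1/m) * \<bar>X d - X c\<bar> + (2*\<bar>A\<bar> + B*B/m) * (d - c)" by (simp add: algebra_simps)
    also have "\<dots> \<le> L * \<bar>X d - X c\<bar> + L * (d - c)"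
      using cd by (intro add_mono mult_right_mono) (auto simp: L_def)
    finally show "\<bar>FF d - FF c\<bar> \<le> L * \<bar>X d - X c\<bar> + L * (d - c)" .
  qed
  define g where "g u = (indicator {0..} u *\<^sub>R C u) * (indicator {0..T} u *\<^sub>R X u) * (indicator {0..} u *\<^sub>R C u)" for u
  have gm: "g \<in> borel_measurable borel"
  proof -
    have 1: "(\<lambda>u. indicator {0..} u *\<^sub>R C u) \<in> borel_measurable borel"
      using F(1) unfolding set_borel_measurable_def by simp
    have 2: "(\<lambda>u. indicator {0..T} u *\<^sub>R X u) \<in> borel_measurable borel"
      using cont by (intro borel_measurable_continuous_on_indicator) auto
    show ?thesis unfolding g_def using 1 2 by (intro borel_measurable_times) auto
  qed
  have gval: "g u = C u * X u * C u" if "u \<in> {0..T}" for u using that by (simp add: g_def)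
  have g0: "\<And>t. t \<in> {0..T} \<Longrightarrow> g t \<ge> 0"
  proof -
    fix t assume t: "t \<in> {0..T}"
    have "C t * X t * C t = X t * (C t)\<^sup>2" by (simp add: power2_eq_square algebra_simps)
    moreover have "X t * (C t)\<^sup>2 \<ge> 0" using pos[OF t] by simp
    ultimately show "g t \<ge> 0" unfolding gval[OF t] by linarith
  qed
  have derF: "AE u in lborel. u \<in> {0..T} \<longrightarrow> (\<exists>d. (FF has_real_derivative d) (at u within {0..T}) \<and> d \<le> g u)"
    using F(5)
  proof (rule eventually_mono)
    fix u assume du: "u \<ge> 0 \<longrightarrow> (X has_real_derivative (A * X u + X u * A - X u * C u * C u * X u + B * B)) (at u)"
    show "u \<in> {0..T} \<longrightarrow> (\<exists>d. (FF has_real_derivative d) (at u within {0..T}) \<and> d \<le> g u)"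
    proof
      assume u: "u \<in> {0..T}"
      define X' where "X' = A * X u + X u * A - X u * C u * C u * X u + B * B"
      have "u \<ge> 0" using u by simp
      then have "(X has_real_derivative X') (at u)" using du unfolding X'_def by blast
      then have dX: "(X has_real_derivative X') (at u within {0..T})"
        by (rule has_field_derivative_at_within)
      have dln: "((\<lambda>u. ln (X u)) has_real_derivative (1 / X u * X')) (at u within {0..T})"
        by (rule DERIV_chain2[OF DERIV_ln_divide[OF pos[OF u]] dX])
      have dJ: "(J has_real_derivative (1 / X u)) (at u within {0..T})"
        unfolding J_def by (rule integral_has_real_derivative[OF contI u])
      have dl: "((\<lambda>x. 2*A*x) has_real_derivative (2*A*1)) (at u within {0..T})"
        by (rule DERIV_cmult[OF DERIV_ident])
      have "(FF has_real_derivative (- (1 / X u * X') + 2*A*1 + B*B*(1 / X u))) (at u within {0..T})"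
        unfolding FF_def by (rule DERIV_add[OF DERIV_add[OF DERIV_minus[OF dln] dl] DERIV_cmult[OF dJ]])
      moreover have "- (1 / X u * X') + 2*A*1 + B*B*(1 / X u) = g u"
        using pos[OF u] unfolding gval[OF u] X'_def by (simp add: field_simps)
      ultimately show "\<exists>d. (FF has_real_derivative d) (at u within {0..T}) \<and> d \<le> g u" by (metis order_refl)
    qed
  qed
  have main: "ennreal (FF T - FF 0) \<le> (\<integral>\<^sup>+u\<in>{0..T}. ennreal (g u) \<partial>lborel)"
    by (rule ftc_ineq[OF T0 acF gm _ derF]) (use g0 in auto)
  also have "(\<integral>\<^sup>+u\<in>{0..T}. ennreal (g u) \<partial>lborel) = (\<integral>\<^sup>+ t\<in>{0..T}. ennreal (C t * X t * C t) \<partial>lborel)"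
    by (intro nn_integral_cong) (auto simp: gval split: split_indicator)
  finally have main': "ennreal (FF T - FF 0) \<le> (\<integral>\<^sup>+ t\<in>{0..T}. ennreal (C t * X t * C t) \<partial>lborel)" .
  have XT: "X T \<le> M" "X T > 0" using ric_bounded[OF ric A T0] pos[of T] T by (auto simp: M_def)
  have "ln (X T) \<le> ln M" using XT by (subst ln_le_cancel_iff) auto
  then have "ln \<Sigma>0 - ln M + 2*A*T + B*B * integral {0..T} (\<lambda>s. 1 / X s) \<le> FF T - FF 0"
    unfolding FF_def J_def using F(3) by simp
  then have "ennreal (ln \<Sigma>0 - ln M + 2*A*T + B*B * integral {0..T} (\<lambda>s. 1 / X s)) \<le> ennreal (FF T - FF 0)"
    by (rule ennreal_leI)
  then show ?thesis using main' unfolding M_def by (rule order.trans)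
qed



lemma c_over_T: "((\<lambda>T::real. c / T) \<longlongrightarrow> 0) at_top"
  by (rule tendsto_divide_0[OF tendsto_const filterlim_at_top_imp_at_infinity[OF filterlim_ident]])

lemma integral_inv_ge:
  fixes X :: "real \<Rightarrow> real"
  assumes T: "0 \<le> T" and a: "a > 0" and cont: "continuous_on {0..T} X" and pos: "\<And>u. u \<in> {0..T} \<Longrightarrow> X u > 0"
  shows "2*T/a - integral {0..T} X / a\<^sup>2 \<le> integral {0..T} (\<lambda>s. 1 / X s)"
proof -
  have nz: "\<And>u. u \<in> {0..T} \<Longrightarrow> X u \<noteq> 0" using pos by (metis less_irrefl)
  have iX: "X integrable_on {0..T}" using cont by (rule integrable_continuous_interval)
  have i1: "(\<lambda>s. 1 / X s) integrable_on {0..T}"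
    using cont nz by (intro integrable_continuous_interval continuous_intros) auto
  have i2: "(\<lambda>s. 2 / a - X s / a\<^sup>2) integrable_on {0..T}"
    using cont a by (intro integrable_continuous_interval continuous_intros) auto
  have pw: "2 / a - X s / a\<^sup>2 \<le> 1 / X s" if "s \<in> {0..T}" for s
  proof -
    have x: "X s > 0" using pos that by simp
    have "0 \<le> (X s - a)\<^sup>2" by simp
    then have "0 \<le> ((X s - a)\<^sup>2) / (X s * a\<^sup>2)" using x a by simp
    also have "((X s - a)\<^sup>2) / (X s * a\<^sup>2) = 1 / X s - (2 / a - X s / a\<^sup>2)"
      using x a by (simp add: field_simps power2_eq_square)
    finally show ?thesis by simp
  qed
  have "integral {0..T} (\<lambda>s. 2 / a - X s / a\<^sup>2) \<le> integral {0..T} (\<lambda>s. 1 / X s)"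
    using i2 i1 pw by (rule integral_le)
  moreover have "integral {0..T} (\<lambda>s. 2 / a - X s / a\<^sup>2) = 2*T/a - integral {0..T} X / a\<^sup>2"
  proof -
    have "integral {0..T} (\<lambda>s. 2 / a - X s / a\<^sup>2) = integral {0..T} (\<lambda>s. 2 / a) - integral {0..T} (\<lambda>s. X s / a\<^sup>2)"
      using cont a by (intro integral_diff integrable_continuous_interval continuous_intros) auto
    also have "integral {0..T} (\<lambda>s. X s / a\<^sup>2) = integral {0..T} X / a\<^sup>2"
      using integral_mult_right[where c = "1/a\<^sup>2" and f = X and S = "{0..T}"] by (simp add: divide_inverse)
    finally show ?thesis using T by simp
  qed
  ultimately show ?thesis by simp
qed

lemma lower_bound:
  assumes A: "A < 0" and B: "B \<noteq> 0" and D: "D > 0"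
    and ric: "riccati_solution_scalar A B \<Sigma>0 C X" and dist: "distortion_scalar X \<le> ennreal D"
  shows "ennreal (log 2 (exp 1) * max 0 (A + B\<^sup>2 / (2 * D))) \<le> rate_scalar C X"
proof (cases "A + B\<^sup>2 / (2 * D) \<le> 0")
  case True
  then show ?thesis by simp
next
  case False
  note F = ric_facts[OF ric]
  define c0 where "c0 = ln \<Sigma>0 - ln (max \<Sigma>0 (-(B*B)/(2*A)))"
  have key: "ennreal ((2*A + B*B/(D+\<epsilon>)) / (2 * ln 2)) \<le> rate_scalar C X" if eps: "\<epsilon> > 0" for \<epsilon>
  proof -
    define a where "a = D + \<epsilon>"
    have a: "a > 0" using D eps by (simp add: a_def)
    define h where "h T = (c0 / T + 2*A + B*B/a) / (2 * ln 2)" for T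
    have "distortion_scalar X < ennreal a" using dist D eps by (simp add: a_def order.strict_trans1 ennreal_lessI)
    then have ev1: "eventually (\<lambda>T. ennreal (1 / T) * (\<integral>\<^sup>+ t \<in> {0..T}. ennreal (X t) \<partial>lborel) < ennreal a) at_top"
      unfolding distortion_scalar_def by (rule Limsup_lessD)
    have ev: "eventually (\<lambda>T. ennreal (h T) \<le> ennreal (1 / T) * ennreal (1 / (2 * ln 2)) *
         (\<integral>\<^sup>+ t \<in> {0..T}. ennreal (C t * X t * C t) \<partial>lborel)) at_top"
      using ev1 eventually_gt_at_top[of 0]
    proof (rule eventually_mono[OF eventually_conj])
      fix T :: real assume H: "ennreal (1 / T) * (\<integral>\<^sup>+ t \<in> {0..T}. ennreal (X t) \<partial>lborel) < ennreal a \<and> 0 < T"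
      then have T: "T > 0" and HT: "ennreal (1 / T) * (\<integral>\<^sup>+ t \<in> {0..T}. ennreal (X t) \<partial>lborel) < ennreal a" by auto
      have T0: "0 \<le> T" using T by simp
      have cont: "continuous_on {0..T} X" using F(2)[OF T0] by (rule ac_continuous)
      have pos: "\<And>u. u \<in> {0..T} \<Longrightarrow> X u > 0" using F(4) by auto
      define Y where "Y = integral {0..T} X"
      have "(X has_integral Y) {0..T}" unfolding Y_def
        using cont by (intro integrable_integral integrable_continuous_interval)
      then have IY: "(\<integral>\<^sup>+ t \<in> {0..T}. ennreal (X t) \<partial>lborel) = ennreal Y"
        using pos by (intro nn_integral_has_integral_lebesgue') (auto intro: less_imp_le)
      have Y0: "Y \<ge> 0" unfolding Y_def using cont pos
        by (intro integral_nonneg integrable_continuous_interval) (auto intro: less_imp_le)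
      have "ennreal (Y / T) < ennreal a" using HT T unfolding IY by (simp add: ennreal_mult''[symmetric] divide_inverse mult.commute)
      then have "Y / T < a" using Y0 T by (simp add: ennreal_less_iff)
      then have YT: "Y < a * T" using T by (simp add: divide_less_eq)
      have "T / a \<le> 2*T/a - Y / a\<^sup>2"
      proof -
        have "Y / a\<^sup>2 \<le> (a * T) / a\<^sup>2" using YT a by (intro divide_right_mono) auto
        also have "(a * T) / a\<^sup>2 = T / a" using a by (simp add: power2_eq_square)
        finally show ?thesis by simp
      qed
      also have "\<dots> \<le> integral {0..T} (\<lambda>s. 1 / X s)" unfolding Y_def using T0 a cont pos by (rule integral_inv_ge)
      finally have JT: "T / a \<le> integral {0..T} (\<lambda>s. 1 / X s)" .
      have "c0 + 2*A*T + B*B*(T/a) \<le> c0 + 2*A*T + B*B * integral {0..T} (\<lambda>s. 1 / X s)"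
        using mult_left_mono[OF JT, of "B*B"] by simp
      then have "ennreal (c0 + 2*A*T + B*B*(T/a)) \<le> (\<integral>\<^sup>+ t\<in>{0..T}. ennreal (C t * X t * C t) \<partial>lborel)"
        using ric_integral_ineq[OF ric A T] unfolding c0_def by (meson ennreal_leI order.trans)
      then have "ennreal (1 / T) * ennreal (1 / (2 * ln 2)) * ennreal (c0 + 2*A*T + B*B*(T/a)) \<le>
           ennreal (1 / T) * ennreal (1 / (2 * ln 2)) * (\<integral>\<^sup>+ t\<in>{0..T}. ennreal (C t * X t * C t) \<partial>lborel)"
        by (rule mult_left_mono) simp
      moreover have "ennreal (1 / T) * ennreal (1 / (2 * ln 2)) * ennreal (c0 + 2*A*T + B*B*(T/a)) = ennreal (h T)"
      proof -
        have "ennreal (1 / T) * ennreal (1 / (2 * ln 2)) * ennreal (c0 + 2*A*T + B*B*(T/a)) =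
              ennreal (1 / T * (1 / (2 * ln 2)) * (c0 + 2*A*T + B*B*(T/a)))"
          using T by (simp add: ennreal_mult'[symmetric])
        also have "1 / T * (1 / (2 * ln 2)) * (c0 + 2*A*T + B*B*(T/a)) = h T"
          unfolding h_def using T a by (simp add: field_simps)
        finally show ?thesis .
      qed
      ultimately show "ennreal (h T) \<le> ennreal (1 / T) * ennreal (1 / (2 * ln 2)) *
         (\<integral>\<^sup>+ t \<in> {0..T}. ennreal (C t * X t * C t) \<partial>lborel)" by simp
    qed
    have lim: "((\<lambda>T. ennreal (h T)) \<longlongrightarrow> ennreal ((2*A + B*B/a) / (2 * ln 2))) at_top"
      unfolding h_def by (intro tendsto_ennrealI tendsto_intros c_over_T[THEN tendsto_add[OF _ tendsto_const], simplified]) auto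
    have "ennreal ((2*A + B*B/a) / (2 * ln 2)) = Limsup at_top (\<lambda>T. ennreal (h T))"
      using lim by (intro lim_imp_Limsup[symmetric]) auto
    also have "\<dots> \<le> rate_scalar C X" unfolding rate_scalar_def using ev by (rule Limsup_mono)
    finally show ?thesis by (simp add: a_def)
  qed
  define v where "v = (2*A + B*B/D) / (2 * ln 2)"
  have lhs: "log 2 (exp 1) * max 0 (A + B\<^sup>2 / (2 * D)) = v"
    using False D by (simp add: v_def log_def power2_eq_square field_simps)
  have BB: "B*B > 0" using B by (cases "B > 0") (auto simp: mult_neg_neg)
  have "ennreal v \<le> rate_scalar C X"
  proof (rule ennreal_le_epsilon)
    fix e :: real assume e: "e > 0"
    define \<epsilon> where "\<epsilon> = 2 * ln 2 * e * D\<^sup>2 / (B*B)"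
    have eps: "\<epsilon> > 0" using e D BB by (simp add: \<epsilon>_def)
    have inv: "1/D - \<epsilon>/D\<^sup>2 \<le> 1/(D+\<epsilon>)"
    proof -
      have "(1/D - \<epsilon>/D\<^sup>2) * (D + \<epsilon>) = 1 - \<epsilon>\<^sup>2/D\<^sup>2" using D by (simp add: field_simps power2_eq_square)
      also have "\<dots> \<le> 1" by simp
      finally show ?thesis using D eps by (simp add: le_divide_eq)
    qed
    have "v - e \<le> (2*A + B*B/(D+\<epsilon>)) / (2 * ln 2)"
    proof -
      have "B*B*(1/D - \<epsilon>/D\<^sup>2) \<le> B*B*(1/(D+\<epsilon>))" using inv BB by (intro mult_left_mono) auto
      then have "B*B/D - B*B*\<epsilon>/D\<^sup>2 \<le> B*B/(D+\<epsilon>)" by (simp add: algebra_simps)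
      moreover have "B*B*\<epsilon>/D\<^sup>2 = 2 * ln 2 * e" using D B by (simp add: \<epsilon>_def field_simps)
      ultimately have "2*A + B*B/D - 2 * ln 2 * e \<le> 2*A + B*B/(D+\<epsilon>)" by simp
      then have "(2*A + B*B/D - 2 * ln 2 * e) / (2 * ln 2) \<le> (2*A + B*B/(D+\<epsilon>)) / (2 * ln 2)"
        by (intro divide_right_mono) auto
      moreover have "(2*A + B*B/D - 2 * ln 2 * e) / (2 * ln 2) = v - e" by (simp add: v_def field_simps)
      ultimately show ?thesis by simp
    qed
    then have "ennreal v \<le> ennreal (max 0 ((2*A + B*B/(D+\<epsilon>)) / (2 * ln 2)) + e)"
      by (intro ennreal_leI) linarith
    also have "\<dots> = ennreal ((2*A + B*B/(D+\<epsilon>)) / (2 * ln 2)) + ennreal e"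
      using e by (subst ennreal_plus) (auto simp: ennreal_max_0)
    also have "\<dots> \<le> rate_scalar C X + ennreal e" using key[OF eps] by (rule add_right_mono)
    finally show "ennreal v \<le> rate_scalar C X + ennreal e" .
  qed
  then show ?thesis using lhs by simp
qed



lemma exp_lip:
  fixes u w :: real assumes "u \<le> w" "w \<le> 0"
  shows "\<bar>exp w - exp u\<bar> \<le> w - u"
proof -
  have "exp u = exp w * exp (u - w)" by (simp add: exp_diff)
  then have eq: "exp w - exp u = exp w * (1 - exp (u - w))" by (simp add: algebra_simps)
  have "exp (u - w) \<le> 1" using assms by simp
  then have nn: "0 \<le> 1 - exp (u - w)" by simp
  have "1 + (u - w) \<le> exp (u - w)" by (rule exp_ge_add_one_self)
  then have le: "1 - exp (u - w) \<le> w - u" by linarith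
  have "exp w \<le> 1" using assms by simp
  have "exp w * (1 - exp (u - w)) \<le> 1 * (w - u)"
    using \<open>exp w \<le> 1\<close> le nn by (intro mult_mono) auto
  moreover have "0 \<le> exp w * (1 - exp (u - w))" using nn by simp
  ultimately show ?thesis unfolding eq by simp
qed

lemma avg_bound:
  fixes h :: "real \<Rightarrow> real"
  assumes A: "A < 0" and h0: "\<And>t. t \<ge> 0 \<Longrightarrow> h t \<ge> 0" and L: "L \<ge> 0" and c: "c \<ge> 0" and R: "R \<ge> 0"
    and hb: "\<And>t. t \<ge> 0 \<Longrightarrow> h t \<le> L + R * exp (2*A*t)"
  shows "Limsup at_top (\<lambda>T. ennreal (1/T) * ennreal c * (\<integral>\<^sup>+ t\<in>{0..T}. ennreal (h t) \<partial>lborel)) \<le> ennreal (c * L)"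
proof (rule ennreal_le_epsilon)
  fix \<eta> :: real assume eta: "\<eta> > 0"
  define \<delta> where "\<delta> = min (1/2) (\<eta> / (c * R + 1))"
  have "c * R \<ge> 0" using c R by simp
  then have "\<eta> / (c * R + 1) > 0" using eta by (intro divide_pos_pos) auto
  then have d: "\<delta> > 0" "\<delta> < 1" by (auto simp: \<delta>_def)
  have cRd: "c * R * \<delta> \<le> \<eta>"
  proof -
    have "c * R * \<delta> \<le> c * R * (\<eta> / (c * R + 1))" using c R by (intro mult_left_mono) (auto simp: \<delta>_def)
    also have "\<dots> = \<eta> * (c * R / (c * R + 1))" by simp
    also have "\<dots> \<le> \<eta> * 1" using eta \<open>c * R \<ge> 0\<close> by (intro mult_left_mono) auto
    finally show ?thesis by simp
  qed
  define t0 where "t0 = ln \<delta> / (2 * A)"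
  have t0: "t0 \<ge> 0" using d A by (simp add: t0_def divide_nonpos_neg)
  have small: "exp (2*A*t) \<le> \<delta>" if "t \<ge> t0" for t
  proof -
    have "2*A*t \<le> 2*A*t0" using that A by (intro mult_left_mono_neg) auto
    also have "2*A*t0 = ln \<delta>" using A by (simp add: t0_def)
    finally have "exp (2*A*t) \<le> exp (ln \<delta>)" by simp
    then show ?thesis using d by simp
  qed
  define H where "H T = ennreal (c * (L + R * \<delta>) + c * R * t0 / T)" for T
  have ev: "eventually (\<lambda>T. ennreal (1/T) * ennreal c * (\<integral>\<^sup>+ t\<in>{0..T}. ennreal (h t) \<partial>lborel) \<le> H T) at_top"
    using eventually_ge_at_top[of "max t0 1"]
  proof (rule eventually_mono)
    fix T assume T: "max t0 1 \<le> T"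
    then have T1: "T \<ge> 1" "T \<ge> t0" by auto
    have "(\<integral>\<^sup>+ t\<in>{0..T}. ennreal (h t) \<partial>lborel) \<le>
          (\<integral>\<^sup>+ t. ennreal (L + R * \<delta>) * indicator {0..T} t + ennreal R * indicator {0..t0} t \<partial>lborel)"
    proof (rule nn_integral_mono)
      fix t
      show "ennreal (h t) * indicator {0..T} t \<le> ennreal (L + R * \<delta>) * indicator {0..T} t + ennreal R * indicator {0..t0} t"
      proof (cases "t \<in> {0..T}")
        case True
        then have t: "t \<ge> 0" by simp
        have "h t \<le> (L + R * \<delta>) + R * indicator {0..t0} t"
        proof (cases "t \<le> t0")
          case True
          have "exp (2*A*t) \<le> 1" using A t by (simp add: mult_nonpos_nonneg)
          then have "R * exp (2*A*t) \<le> R * 1" using R by (intro mult_left_mono) auto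
          moreover have "0 \<le> R * \<delta>" using R d by simp
          ultimately have "h t \<le> L + R * \<delta> + R" using hb[OF t] by linarith
          then show ?thesis using True t by (simp add: indicator_def)
        next
          case False
          then have "R * exp (2*A*t) \<le> R * \<delta>" using small[of t] R by (intro mult_left_mono) auto
          then show ?thesis using hb[OF t] False R by (simp add: indicator_def)
        qed
        then have "ennreal (h t) \<le> ennreal ((L + R * \<delta>) + R * indicator {0..t0} t)" by (rule ennreal_leI)
        also have "\<dots> = ennreal (L + R * \<delta>) + ennreal R * indicator {0..t0} t"
          using L R d by (subst ennreal_plus) (auto simp: indicator_def)
        finally show ?thesis using True by simp
      next
        case False
        then show ?thesis by simp
      qed
    qed
    also have "\<dots> = ennreal (L + R * \<delta>) * emeasure lborel {0..T} + ennreal R * emeasure lborel {0..t0}"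
      by (subst nn_integral_add) (auto simp: nn_integral_cmult_indicator)
    also have "\<dots> = ennreal ((L + R * \<delta>) * T + R * t0)"
      using T1 t0 L R d by (simp add: ennreal_mult ennreal_plus)
    finally have I: "(\<integral>\<^sup>+ t\<in>{0..T}. ennreal (h t) \<partial>lborel) \<le> ennreal ((L + R * \<delta>) * T + R * t0)" .
    have "ennreal (1/T) * ennreal c * (\<integral>\<^sup>+ t\<in>{0..T}. ennreal (h t) \<partial>lborel) \<le>
          ennreal (1/T) * ennreal c * ennreal ((L + R * \<delta>) * T + R * t0)"
      using I by (rule mult_left_mono) simp
    also have "\<dots> = ennreal (1/T * c * ((L + R * \<delta>) * T + R * t0))"
      using T1 c by (simp add: ennreal_mult'[symmetric])
    also have "1/T * c * ((L + R * \<delta>) * T + R * t0) = c * (L + R * \<delta>) + c * R * t0 / T"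
      using T1 by (simp add: field_simps)
    finally show "ennreal (1/T) * ennreal c * (\<integral>\<^sup>+ t\<in>{0..T}. ennreal (h t) \<partial>lborel) \<le> H T"
      by (simp add: H_def)
  qed
  have lim: "(H \<longlongrightarrow> ennreal (c * (L + R * \<delta>))) at_top"
  proof -
    have "((\<lambda>T. c * (L + R * \<delta>) + c * R * t0 / T) \<longlongrightarrow> c * (L + R * \<delta>) + 0) at_top"
      by (intro tendsto_add tendsto_const tendsto_divide_0[OF tendsto_const filterlim_at_top_imp_at_infinity[OF filterlim_ident]])
    then show ?thesis unfolding H_def by (intro tendsto_ennrealI) simp
  qed
  have "Limsup at_top (\<lambda>T. ennreal (1/T) * ennreal c * (\<integral>\<^sup>+ t\<in>{0..T}. ennreal (h t) \<partial>lborel)) \<le> Limsup at_top H"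
    using ev by (rule Limsup_mono)
  also have "Limsup at_top H = ennreal (c * (L + R * \<delta>))" using lim by (intro lim_imp_Limsup) auto
  also have "\<dots> \<le> ennreal (c * L + \<eta>)" using cRd by (intro ennreal_leI) (simp add: algebra_simps)
  also have "\<dots> = ennreal (c * L) + ennreal \<eta>" using c L eta by (simp add: ennreal_plus)
  finally show "Limsup at_top (\<lambda>T. ennreal (1/T) * ennreal c * (\<integral>\<^sup>+ t\<in>{0..T}. ennreal (h t) \<partial>lborel)) \<le> ennreal (c * L) + ennreal \<eta>" .
qed



theorem mainTheorem2:
  fixes A B \<Sigma>0 D :: real
  assumes "A < 0" and "B \<noteq> 0" and "\<Sigma>0 > 0" and "D > 0"
  shows "info_distortion_scalar A B \<Sigma>0 D =
           ennreal (log 2 (exp 1) * max 0 (A + B\<^sup>2 / (2 * D)))"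
proof -
  note A = assms(1) and B = assms(2) and S0 = assms(3) and D = assms(4)
  define tgt where "tgt = ennreal (log 2 (exp 1) * max 0 (A + B\<^sup>2 / (2 * D)))"
  define Xs where "Xs = -(B*B)/(2*A)"
  define Xf where "Xf = min D Xs"
  define K where "K = B*B + 2*A*Xf"
  define X0 where "X0 t = Xf + (\<Sigma>0 - Xf) * exp (2*A*t)" for t
  define C0 where "C0 t = sqrt K / X0 t" for t
  define mm where "mm = min \<Sigma>0 Xf"
  have BB: "B*B > 0" using B by (cases "B > 0") (auto simp: mult_neg_neg)
  have Xs: "Xs > 0" using BB A by (simp add: Xs_def divide_pos_neg)
  have Xf: "Xf > 0" "Xf \<le> D" "Xf \<le> Xs" using Xs D by (auto simp: Xf_def)
  have K0: "K \<ge> 0"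
  proof -
    have "A * Xs \<le> A * Xf" using A Xf by (intro mult_left_mono_neg) auto
    moreover have "2 * A * Xs = -(B*B)" using A by (simp add: Xs_def)
    ultimately show ?thesis by (simp add: K_def)
  qed
  have mm: "mm > 0" using S0 Xf by (simp add: mm_def)
  have X0ge: "X0 t \<ge> mm" if "t \<ge> 0" for t
  proof -
    have e: "0 < exp (2*A*t)" "exp (2*A*t) \<le> 1" using A that by (auto simp: mult_nonpos_nonneg)
    have "X0 t = Xf * (1 - exp (2*A*t)) + \<Sigma>0 * exp (2*A*t)" by (simp add: X0_def algebra_simps)
    also have "\<dots> \<ge> mm * (1 - exp (2*A*t)) + mm * exp (2*A*t)"
      using e by (intro add_mono mult_right_mono) (auto simp: mm_def)
    finally show ?thesis by (simp add: algebra_simps)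
  qed
  have X0pos: "X0 t > 0" if "t \<ge> 0" for t using X0ge[OF that] mm by simp
  have X0cont: "continuous_on S X0" for S unfolding X0_def by (intro continuous_intros)
  have ric: "riccati_solution_scalar A B \<Sigma>0 C0 X0"
    unfolding riccati_solution_scalar_def
  proof (intro conjI)
    have "continuous_on {0..} C0" unfolding C0_def
      using X0cont X0pos by (intro continuous_intros) (auto simp: less_imp_neq[symmetric] dest!: X0pos)
    then show "set_borel_measurable lborel {0..} C0"
      unfolding set_borel_measurable_def using borel_measurable_continuous_on_indicator[of "{0..}" C0]
      by simp
    show "abs_continuous_on_halfline X0" unfolding abs_continuous_on_halfline_def
    proof (intro allI impI)
      fix b :: real assume "b \<ge> 0"
      show "abs_continuous_on_interval 0 b X0"
      proof (rule ac_lipschitz[of "\<bar>\<Sigma>0 - Xf\<bar> * (2 * \<bar>A\<bar>)"])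
        show "0 \<le> \<bar>\<Sigma>0 - Xf\<bar> * (2 * \<bar>A\<bar>)" by simp
        fix c d :: real assume cd: "0 \<le> c" "c \<le> d" "d \<le> b"
        have "\<bar>X0 d - X0 c\<bar> = \<bar>\<Sigma>0 - Xf\<bar> * \<bar>exp (2*A*c) - exp (2*A*d)\<bar>"
          by (simp add: X0_def algebra_simps abs_mult[symmetric])
        also have "\<bar>exp (2*A*c) - exp (2*A*d)\<bar> \<le> 2*A*c - 2*A*d"
          using cd A by (intro exp_lip) (auto simp: mult_nonpos_nonneg intro: mult_left_mono_neg)
        also have "2*A*c - 2*A*d = (2 * \<bar>A\<bar>) * (d - c)" using A by (simp add: algebra_simps)
        finally show "\<bar>X0 d - X0 c\<bar> \<le> \<bar>\<Sigma>0 - Xf\<bar> * (2 * \<bar>A\<bar>) * (d - c)"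
          by (simp add: mult_left_mono mult.assoc)
      qed
    qed
    show "X0 0 = \<Sigma>0" by (simp add: X0_def)
    show "\<forall>t\<ge>0. 0 < X0 t" using X0pos by auto
    show "AE t in lborel. t \<ge> 0 \<longrightarrow> (X0 has_real_derivative (A * X0 t + X0 t * A - X0 t * C0 t * C0 t * X0 t + B * B)) (at t)"
    proof (intro AE_I2 impI)
      fix t :: real assume t: "t \<ge> 0"
      have d: "(X0 has_real_derivative ((\<Sigma>0 - Xf) * (exp (2*A*t) * (2*A)))) (at t)"
        unfolding X0_def by (auto intro!: derivative_eq_intros)
      have "X0 t * C0 t * C0 t * X0 t = K"
      proof -
        have "X0 t * C0 t * C0 t * X0 t = (sqrt K * sqrt K) * (X0 t / X0 t) * (X0 t / X0 t)"
          by (simp add: C0_def)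
        also have "\<dots> = K" using X0pos[OF t] K0 by simp
        finally show ?thesis .
      qed
      then have "A * X0 t + X0 t * A - X0 t * C0 t * C0 t * X0 t + B * B = (\<Sigma>0 - Xf) * (exp (2*A*t) * (2*A))"
        by (simp add: X0_def K_def algebra_simps)
      then show "(X0 has_real_derivative (A * X0 t + X0 t * A - X0 t * C0 t * C0 t * X0 t + B * B)) (at t)"
        using d by simp
    qed
  qed
  have dist: "distortion_scalar X0 \<le> ennreal D"
  proof -
    have "distortion_scalar X0 = Limsup at_top (\<lambda>T. ennreal (1/T) * ennreal 1 * (\<integral>\<^sup>+ t\<in>{0..T}. ennreal (X0 t) \<partial>lborel))"
      by (simp add: distortion_scalar_def)
    also have "\<dots> \<le> ennreal (1 * Xf)"
    proof (rule avg_bound[OF A])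
      show "\<And>t. 0 \<le> t \<Longrightarrow> 0 \<le> X0 t" using X0pos by (simp add: less_imp_le)
      show "\<And>t. 0 \<le> t \<Longrightarrow> X0 t \<le> Xf + \<bar>\<Sigma>0 - Xf\<bar> * exp (2 * A * t)"
        by (simp add: X0_def mult_right_mono)
    qed (use Xf in auto)
    also have "\<dots> \<le> ennreal D" using Xf by (intro ennreal_leI) auto
    finally show ?thesis .
  qed
  have rate: "rate_scalar C0 X0 \<le> ennreal (1 / (2 * ln 2) * (K / Xf))"
    unfolding rate_scalar_def
  proof (rule avg_bound[OF A])
    fix t :: real assume t: "0 \<le> t"
    have CXC: "C0 t * X0 t * C0 t = K / X0 t"
      using X0pos[OF t] K0 by (simp add: C0_def power2_eq_square field_simps)
    show "0 \<le> C0 t * X0 t * C0 t" unfolding CXC using K0 X0pos[OF t] by simp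
    have "K / X0 t - K / Xf = K * ((Xf - X0 t) / (X0 t * Xf))"
      using X0pos[OF t] Xf by (simp add: field_simps)
    also have "\<dots> \<le> K * (\<bar>\<Sigma>0 - Xf\<bar> * exp (2*A*t) / (mm * Xf))"
    proof (intro mult_left_mono K0)
      have "Xf - X0 t = (-(\<Sigma>0 - Xf)) * exp (2*A*t)" by (simp add: X0_def algebra_simps)
      also have "\<dots> \<le> \<bar>\<Sigma>0 - Xf\<bar> * exp (2*A*t)" by (intro mult_right_mono) auto
      finally have "Xf - X0 t \<le> \<bar>\<Sigma>0 - Xf\<bar> * exp (2*A*t)" .
      have "(Xf - X0 t) / (X0 t * Xf) \<le> \<bar>\<Sigma>0 - Xf\<bar> * exp (2*A*t) / (X0 t * Xf)"
        using \<open>Xf - X0 t \<le> _\<close> X0pos[OF t] Xf by (intro divide_right_mono) auto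
      also have "\<dots> \<le> \<bar>\<Sigma>0 - Xf\<bar> * exp (2*A*t) / (mm * Xf)"
        using X0ge[OF t] mm Xf by (intro divide_left_mono mult_right_mono mult_pos_pos) auto
      finally show "(Xf - X0 t) / (X0 t * Xf) \<le> \<bar>\<Sigma>0 - Xf\<bar> * exp (2*A*t) / (mm * Xf)" .
    qed
    finally show "C0 t * X0 t * C0 t \<le> K / Xf + K * \<bar>\<Sigma>0 - Xf\<bar> / (mm * Xf) * exp (2*A*t)"
      unfolding CXC by (simp add: algebra_simps)
  qed (use K0 Xf mm in auto)
  also have "ennreal (1 / (2 * ln 2) * (K / Xf)) = tgt"
  proof (cases "D \<le> Xs")
    case True
    then have XfD: "Xf = D" by (simp add: Xf_def)
    have "B\<^sup>2 / (2 * D) \<ge> B\<^sup>2 / (2 * Xs)" using True D BB by (intro divide_left_mono) (auto simp: power2_eq_square)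
    moreover have "B\<^sup>2 / (2 * Xs) = -A" using A B by (simp add: Xs_def power2_eq_square field_simps)
    ultimately have eqm: "max 0 (A + B\<^sup>2 / (2 * D)) = A + B\<^sup>2 / (2 * D)" by simp
    have "1 / (2 * ln 2) * ((B*B + 2*A*D) / D) = log 2 (exp 1) * (A + B\<^sup>2 / (2 * D))"
      using D by (simp add: log_def power2_eq_square field_simps)
    then show ?thesis unfolding tgt_def K_def XfD eqm by simp
  next
    case False
    then have XfX: "Xf = Xs" by (simp add: Xf_def)
    have K: "K = 0" unfolding K_def XfX Xs_def using A by simp
    have "B\<^sup>2 / (2 * D) \<le> B\<^sup>2 / (2 * Xs)" using False Xs BB by (intro divide_left_mono) (auto simp: power2_eq_square)
    moreover have "B\<^sup>2 / (2 * Xs) = -A" using A B by (simp add: Xs_def power2_eq_square field_simps)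
    ultimately have "max 0 (A + B\<^sup>2 / (2 * D)) = 0" by simp
    then show ?thesis unfolding tgt_def K by simp
  qed
  finally have rate': "rate_scalar C0 X0 \<le> tgt" .
  have up: "info_distortion_scalar A B \<Sigma>0 D \<le> tgt"
  proof -
    have "rate_scalar C0 X0 \<in> {rate_scalar C X | C X. riccati_solution_scalar A B \<Sigma>0 C X \<and> distortion_scalar X \<le> ennreal D}"
      using ric dist by blast
    then have "info_distortion_scalar A B \<Sigma>0 D \<le> rate_scalar C0 X0"
      unfolding info_distortion_scalar_def by (rule Inf_lower)
    then show ?thesis using rate' by simp
  qed
  have low: "tgt \<le> info_distortion_scalar A B \<Sigma>0 D"
    unfolding info_distortion_scalar_def tgt_def
    by (rule Inf_greatest) (blast intro: lower_bound[OF A B D])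
  show ?thesis using up low by (simp add: tgt_def)
qed

end
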